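(* Let $\alpha\in(0,1)$ be irrational and let $s_\alpha$ be a Sturmian word of angle $\alpha$. For every positive even integer $n$, let $I_n=\{\{-i\alpha\}\mid 1\le i\le n\}$. Then \[ \mathit{ASF}_{s_\alpha}(n)=\begin{cases}\#\{x\in I_n\mid x\le\{-n\alpha\}\} & \text{if } \lfloor n\alpha\rfloor \text{ is even},\\ \#\{x\in I_n\mid x\ge\{-n\alpha\}\} & \text{if } \lfloor n\alpha\rfloor \text{ is odd}.\end{cases} \]
   Context: Alphabet $\{a,b\}$; $\{x\}=x-\lfloor x\rfloor$. For irrational $\alpha\in(0,1)$ and $\rho\in[0,1)$, the Sturmian word $s_{\alpha,\rho}=c_0c_1\cdots$ has $c_m=b$ if $\{\rho+m\alpha\}\in[0,1-\alpha)$ and $c_m=a$ otherwise (or with intervals $(0,1-\alpha]$ and $(1-\alpha,1]$); all these words have the same set of factors and $s_\alpha$ denotes any of them. An abelian square is a word $v_1v_2$ with $v_1,v_2$ having the same numbers of $a$'s and of $b$'s. $\mathit{ASF}_w(n)$ is the number of distinct factors of $w$ of length $n$ that are abelian squares. *)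

theory Defs
  imports Complex_Main
begin

datatype letter = a | b

text \<open>Upper fractional part, with values in (0,1]: used for the second convention.\<close>
definition frac_up :: "real \<Rightarrow> real" where
  "frac_up x = x - of_int \<lceil>x\<rceil> + 1"

definition sturmian :: "bool \<Rightarrow> real \<Rightarrow> real \<Rightarrow> nat \<Rightarrow> letter" where
  "sturmian upper \<alpha> \<rho> m =
     (if upper then (if frac_up (\<rho> + real m * \<alpha>) \<le> 1 - \<alpha> then b else a)
      else (if frac (\<rho> + real m * \<alpha>) < 1 - \<alpha> then b else a))"

definition factors_of_length :: "(nat \<Rightarrow> 'x) \<Rightarrow> nat \<Rightarrow> 'x list set" where
  "factors_of_length w n = {map w [i..<i+n] | i. True}"

definition parikh_eq :: "letter list \<Rightarrow> letter list \<Rightarrow> bool" where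
  "parikh_eq u v \<longleftrightarrow> count_list u a = count_list v a \<and> count_list u b = count_list v b"

definition abelian_square :: "letter list \<Rightarrow> bool" where
  "abelian_square v \<longleftrightarrow> (\<exists>v1 v2. v = v1 @ v2 \<and> parikh_eq v1 v2)"

definition ASF :: "(nat \<Rightarrow> letter) \<Rightarrow> nat \<Rightarrow> nat" where
  "ASF w n = card {v \<in> factors_of_length w n. abelian_square v}"

definition I_set :: "nat \<Rightarrow> real \<Rightarrow> real set" where
  "I_set n \<alpha> = {frac (- (real i * \<alpha>)) | i. 1 \<le> i \<and> i \<le> n}"

end

theory Submission
  imports Defs "HOL-Analysis.Kronecker_Approximation_Theorem"
begin


lemma irr_mult: assumes "(al::real) \<notin> \<rat>" "k > 0" shows "real k * al \<notin> \<int>"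
proof
  assume "real k * al \<in> \<int>"
  then have "real k * al \<in> \<rat>" using Ints_subset_Rats by blast
  from this Rats_of_nat have "(real k * al) / real k \<in> \<rat>" by (rule Rats_divide)
  moreover have "(real k * al) / real k = al" using assms(2) by simp
  ultimately show False using assms(1) by simp
qed

lemma KL:
  assumes "(al::real) \<notin> \<rat>" "k > 0" "0 \<le> th" "th < 1"
  shows "\<lfloor>th + real k * al\<rfloor> = \<lfloor>real k * al\<rfloor> + (if frac (- (real k * al)) \<le> th then 1 else 0)"
proof -
  have ni: "real k * al \<notin> \<int>" using irr_mult assms by blast
  let ?x = "real k * al"
  have fn: "frac (- ?x) = 1 - frac ?x" using ni by (simp add: frac_neg)
  have "th + ?x = of_int \<lfloor>?x\<rfloor> + (th + frac ?x)" by (simp add: frac_def)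
  then have e: "\<lfloor>th + ?x\<rfloor> = \<lfloor>?x\<rfloor> + \<lfloor>th + frac ?x\<rfloor>"
    by (metis add.commute floor_add_int)
  have "0 \<le> frac ?x" "frac ?x < 1" by (auto simp: frac_lt_1)
  then have "\<lfloor>th + frac ?x\<rfloor> = (if 1 - frac ?x \<le> th then 1 else 0)"
    using assms by (auto simp: floor_eq_iff)
  then show ?thesis using e fn by simp
qed

lemma L1: "\<lfloor>frac y + z\<rfloor> = \<lfloor>y + z\<rfloor> - \<lfloor>y\<rfloor>"
proof -
  have "y + z = (frac y + z) + of_int \<lfloor>y\<rfloor>" by (simp add: frac_def)
  then show ?thesis by (metis floor_add_int add_diff_cancel_right')
qed

lemma L2: assumes "0 < (al::real)" "al < 1"
  shows "(\<lfloor>x + al\<rfloor> = \<lfloor>x\<rfloor> + 1) \<longleftrightarrow> 1 - al \<le> frac x"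
proof -
  have "x + al = of_int \<lfloor>x\<rfloor> + (frac x + al)" by (simp add: frac_def)
  then have e: "\<lfloor>x + al\<rfloor> = \<lfloor>x\<rfloor> + \<lfloor>frac x + al\<rfloor>"
    by (metis add.commute floor_add_int)
  have "0 \<le> frac x" "frac x < 1" by (auto simp: frac_lt_1)
  then have "\<lfloor>frac x + al\<rfloor> = (if 1 - al \<le> frac x then 1 else 0)"
    using assms by (auto simp: floor_eq_iff)
  then show ?thesis using e by simp
qed

lemma L2b: assumes "0 < (al::real)" "al < 1"
  shows "\<lfloor>x + al\<rfloor> = \<lfloor>x\<rfloor> \<or> \<lfloor>x + al\<rfloor> = \<lfloor>x\<rfloor> + 1"
proof -
  have "x + al = of_int \<lfloor>x\<rfloor> + (frac x + al)" by (simp add: frac_def)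
  then have e: "\<lfloor>x + al\<rfloor> = \<lfloor>x\<rfloor> + \<lfloor>frac x + al\<rfloor>"
    by (metis add.commute floor_add_int)
  have "0 \<le> frac x" "frac x < 1" by (auto simp: frac_lt_1)
  then have "\<lfloor>frac x + al\<rfloor> = (if 1 - al \<le> frac x then 1 else 0)"
    using assms by (auto simp: floor_eq_iff)
  then show ?thesis using e by auto
qed

lemma L3: assumes "0 < (al::real)" "al < 1"
  shows "frac_up x \<le> 1 - al \<longleftrightarrow> \<lceil>x + al\<rceil> = \<lceil>x\<rceil>"
proof -
  have m: "\<lceil>x\<rceil> \<le> \<lceil>x + al\<rceil>" using assms by (intro ceiling_mono) simp
  have "frac_up x \<le> 1 - al \<longleftrightarrow> x + al \<le> of_int \<lceil>x\<rceil>" unfolding frac_up_def by linarith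
  also have "\<dots> \<longleftrightarrow> \<lceil>x + al\<rceil> \<le> \<lceil>x\<rceil>" by (simp add: ceiling_le_iff)
  finally show ?thesis using m by linarith
qed

lemma L3b: assumes "0 < (al::real)" "al < 1"
  shows "\<lceil>x + al\<rceil> = \<lceil>x\<rceil> \<or> \<lceil>x + al\<rceil> = \<lceil>x\<rceil> + 1"
proof -
  have m: "\<lceil>x\<rceil> \<le> \<lceil>x + al\<rceil>" using assms by (intro ceiling_mono) simp
  have "x \<le> of_int \<lceil>x\<rceil>" by (rule le_of_int_ceiling)
  then have "x + al \<le> of_int (\<lceil>x\<rceil> + 1)" using assms by linarith
  then have "\<lceil>x + al\<rceil> \<le> \<lceil>x\<rceil> + 1" by (simp only: ceiling_le_iff)
  then show ?thesis using m by linarith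
qed

lemma L4: assumes "0 < e" "e < frac_up x" shows "\<lceil>x\<rceil> = \<lfloor>x - e\<rfloor> + 1"
proof -
  have "x \<le> of_int \<lceil>x\<rceil>" by (rule le_of_int_ceiling)
  moreover have "e < x - of_int \<lceil>x\<rceil> + 1" using assms(2) unfolding frac_up_def .
  ultimately have "of_int (\<lceil>x\<rceil> - 1) \<le> x - e \<and> x - e < of_int (\<lceil>x\<rceil> - 1) + 1" using assms(1) by linarith
  then have "\<lfloor>x - e\<rfloor> = \<lceil>x\<rceil> - 1" by (simp only: floor_eq_iff)
  then show ?thesis by simp
qed

lemma frac_up_pos: "frac_up x > 0"
proof -
  have "of_int \<lceil>x\<rceil> - 1 < x \<and> x \<le> of_int \<lceil>x\<rceil>" using ceiling_eq_iff by blast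
  then show ?thesis unfolding frac_up_def by simp
qed

lemma frac_up_eq: assumes "x \<notin> \<int>" shows "frac_up x = frac x"
proof -
  have "x \<noteq> of_int \<lfloor>x\<rfloor>" using assms by (metis Ints_of_int)
  then have "\<lceil>x\<rceil> = \<lfloor>x\<rfloor> + 1" by (simp add: ceiling_altdef)
  then show ?thesis unfolding frac_up_def frac_def by simp
qed

lemma frac_shift_int: assumes "x \<in> \<int>" shows "frac (x + z) = frac z"
proof -
  have "x + z - frac z = x + of_int \<lfloor>z\<rfloor>" by (simp add: frac_def)
  also have "\<dots> \<in> \<int>" using assms by simp
  finally show ?thesis by (simp add: frac_unique_iff frac_lt_1)
qed

lemma length_count: "length xs = count_list xs a + count_list xs b"
  proof (induction xs)
  case (Cons x xs) then show ?case by (cases x) auto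
qed simp




lemma dens:
  fixes al rh lo hi :: real
  assumes "al \<notin> \<rat>" "0 \<le> lo" "lo < hi" "hi \<le> 1"
  shows "\<exists>m::nat. lo < frac (rh + real m * al) \<and> frac (rh + real m * al) < hi"
proof -
  define mid where "mid = (lo + hi) / 2"
  define c where "c = frac (mid - rh)"
  have c01: "0 \<le> c" "c \<le> 1" unfolding c_def using frac_lt_1[of "mid - rh"] by auto
  obtain k where k: "k > 0" "\<bar>frac (real k * al) - c\<bar> < (hi - lo) / 2"
    using Kronecker_approx_1_explicit[OF assms(1) c01, of "(hi - lo)/2"] assms by auto
  define z where "z = mid + (frac (real k * al) - c)"
  have "-(hi-lo)/2 < frac (real k * al) - c \<and> frac (real k * al) - c < (hi-lo)/2" using k(2) by linarith
  then have z: "lo < z" "z < hi" unfolding z_def mid_def by (simp_all add: field_simps)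
  have "rh + real k * al - z = of_int \<lfloor>real k * al\<rfloor> - of_int \<lfloor>mid - rh\<rfloor>"
    unfolding z_def c_def frac_def by simp
  also have "\<dots> \<in> \<int>" by simp
  finally have "frac (rh + real k * al) = z" using z assms by (subst frac_unique_iff) auto
  then show ?thesis using z by metis
qed

locale stu =
  fixes al :: real and n h :: nat
  assumes al0: "0 < al" and al1: "al < 1" and irr: "al \<notin> \<rat>" and nh: "n = 2*h" and hpos: "h > 0"
begin

definition fl :: "real \<Rightarrow> nat \<Rightarrow> int" where "fl th k = \<lfloor>th + real k * al\<rfloor>"
definition L :: "real \<Rightarrow> nat \<Rightarrow> letter" where
  "L th k = (if fl th (Suc k) = fl th k + 1 then letter.a else letter.b)"
definition Wd :: "real \<Rightarrow> letter list" where "Wd th = map (L th) [0..<n]"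
definition B :: "real set" where "B = (\<lambda>j. frac (- (real j * al))) ` {..n}"
definition eqv where "eqv th th' \<longleftrightarrow> (\<forall>p\<in>B. p \<le> th \<longleftrightarrow> p \<le> th')"

lemma fl0: "0 \<le> th \<Longrightarrow> th < 1 \<Longrightarrow> fl th 0 = 0"
  unfolding fl_def by (simp add: floor_eq_iff)

lemma fl_Suc: "fl th (Suc k) = \<lfloor>(th + real k * al) + al\<rfloor>"
  unfolding fl_def by (simp add: algebra_simps)

lemma flstep: "fl th (Suc k) = fl th k \<or> fl th (Suc k) = fl th k + 1"
  unfolding fl_Suc using L2b[OF al0 al1] by (simp add: fl_def)

lemma cnt: "int (count_list (map (L th) [0..<k]) letter.a) = fl th k - fl th 0"
proof (induction k)
  case (Suc k)
  show ?case using Suc flstep[of th k] by (auto simp: L_def)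
qed simp

lemma take_Wd: "k \<le> n \<Longrightarrow> take k (Wd th) = map (L th) [0..<k]"
  unfolding Wd_def by (simp add: take_map)

lemma Wd_eq_iff:
  assumes "0 \<le> th" "th < 1" "0 \<le> th'" "th' < 1"
  shows "Wd th = Wd th' \<longleftrightarrow> (\<forall>k\<le>n. fl th k = fl th' k)"
proof
  assume e: "Wd th = Wd th'"
  show "\<forall>k\<le>n. fl th k = fl th' k"
  proof (intro allI impI)
    fix k assume "k \<le> n"
    then have "map (L th) [0..<k] = map (L th') [0..<k]" using e take_Wd by metis
    then have "fl th k - fl th 0 = fl th' k - fl th' 0" using cnt by metis
    then show "fl th k = fl th' k" using fl0 assms by simp
  qed
next
  assume e: "\<forall>k\<le>n. fl th k = fl th' k"
  show "Wd th = Wd th'" unfolding Wd_def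
  proof (rule map_cong[OF refl])
    fix k assume "k \<in> set [0..<n]"
    then have "k \<le> n" "Suc k \<le> n" by auto
    then show "L th k = L th' k" using e by (simp add: L_def)
  qed
qed

lemma fl_KL: "0 \<le> th \<Longrightarrow> th < 1 \<Longrightarrow> k > 0 \<Longrightarrow>
   fl th k = \<lfloor>real k * al\<rfloor> + (if frac (- (real k * al)) \<le> th then 1 else 0)"
  unfolding fl_def using KL[OF irr] by blast

lemma B_fin: "finite B" unfolding B_def by simp
lemma B_01: "p \<in> B \<Longrightarrow> 0 \<le> p \<and> p < 1" unfolding B_def by (auto simp: frac_lt_1)
lemma B_0: "0 \<in> B" unfolding B_def by force

lemma eqv_iff:
  assumes "0 \<le> th" "th < 1" "0 \<le> th'" "th' < 1"
  shows "(\<forall>k\<le>n. fl th k = fl th' k) \<longleftrightarrow> eqv th th'"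
proof
  assume e: "\<forall>k\<le>n. fl th k = fl th' k"
  show "eqv th th'" unfolding eqv_def
  proof
    fix p assume "p \<in> B"
    then obtain j where j: "j \<le> n" "p = frac (- (real j * al))" unfolding B_def by auto
    show "p \<le> th \<longleftrightarrow> p \<le> th'"
    proof (cases "j = 0")
      case True then show ?thesis using j assms by simp
    next
      case False
      have "fl th j = fl th' j" using e j by simp
      then show ?thesis using fl_KL[OF assms(1,2), of j] fl_KL[OF assms(3,4), of j] False j
        by (auto split: if_splits)
    qed
  qed
next
  assume e: "eqv th th'"
  show "\<forall>k\<le>n. fl th k = fl th' k"
  proof (intro allI impI)
    fix k assume k: "k \<le> n"
    show "fl th k = fl th' k"
    proof (cases "k = 0")
      case True then show ?thesis using fl0 assms by simp
    next
      case False
      have "frac (- (real k * al)) \<in> B" unfolding B_def using k by auto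
      then have "frac (- (real k * al)) \<le> th \<longleftrightarrow> frac (- (real k * al)) \<le> th'"
        using e unfolding eqv_def by blast
      then show ?thesis using fl_KL[OF assms(1,2), of k] fl_KL[OF assms(3,4), of k] False
        by simp
    qed
  qed
qed

lemma Wd_eqv: "0 \<le> th \<Longrightarrow> th < 1 \<Longrightarrow> 0 \<le> th' \<Longrightarrow> th' < 1 \<Longrightarrow> Wd th = Wd th' \<longleftrightarrow> eqv th th'"
  using Wd_eq_iff eqv_iff by blast

end



context stu begin

lemma len_Wd: "length (Wd th) = n" unfolding Wd_def by simp

lemma parikh_len: "parikh_eq u v \<Longrightarrow> length u = length v"
  unfolding parikh_eq_def using length_count[of u] length_count[of v] by simp

lemma cntW: "0 \<le> th \<Longrightarrow> th < 1 \<Longrightarrow> k \<le> n \<Longrightarrow> int (count_list (take k (Wd th)) letter.a) = fl th k"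
  using take_Wd cnt fl0 by simp

lemma AS_iff:
  assumes "0 \<le> th" "th < 1"
  shows "abelian_square (Wd th) \<longleftrightarrow> fl th n = 2 * fl th h"
proof -
  let ?w = "Wd th"
  have hn: "h \<le> n" using nh by simp
  have tot: "int (count_list ?w letter.a) = fl th n"
    using cntW[OF assms, of n] len_Wd by simp
  have ch: "int (count_list (take h ?w) letter.a) = fl th h" using cntW[OF assms hn] .
  have sp: "count_list ?w x = count_list (take h ?w) x + count_list (drop h ?w) x" for x
    by (metis append_take_drop_id count_list_append)
  have lt: "length (take h ?w) = h" "length (drop h ?w) = h" using len_Wd nh by auto
  show ?thesis
  proof
    assume "abelian_square ?w"
    then obtain v1 v2 where v: "?w = v1 @ v2" "parikh_eq v1 v2" unfolding abelian_square_def by blast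
    have "length v1 = length v2" using parikh_len v(2) .
    moreover have "length v1 + length v2 = n" using v(1) len_Wd by (metis length_append)
    ultimately have "length v1 = h" using nh by simp
    then have "v1 = take h ?w" "v2 = drop h ?w" using v(1) by simp_all
    then have "count_list (take h ?w) letter.a = count_list (drop h ?w) letter.a"
      using v(2) unfolding parikh_eq_def by simp
    then show "fl th n = 2 * fl th h" using tot ch sp[of letter.a] by simp
  next
    assume e: "fl th n = 2 * fl th h"
    have ca: "count_list (take h ?w) letter.a = count_list (drop h ?w) letter.a"
      using tot ch sp[of letter.a] e by simp
    moreover have "count_list (take h ?w) letter.b = count_list (drop h ?w) letter.b"
      using ca lt length_count[of "take h ?w"] length_count[of "drop h ?w"] by simp
    ultimately have "parikh_eq (take h ?w) (drop h ?w)" unfolding parikh_eq_def by simp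
    then show "abelian_square ?w" unfolding abelian_square_def
      by (metis append_take_drop_id)
  qed
qed

lemma t_iff:
  assumes "0 \<le> th" "th < 1"
  shows "fl th n = 2 * fl th h \<longleftrightarrow>
    (if even \<lfloor>real n * al\<rfloor> then th < frac (- (real n * al)) else frac (- (real n * al)) \<le> th)"
proof -
  define H where "H = \<lfloor>real h * al\<rfloor>"
  define f where "f = frac (real h * al)"
  have npos: "n > 0" using nh hpos by simp
  have hni: "real h * al \<notin> \<int>" using irr_mult[OF irr hpos] .
  have nni: "real n * al \<notin> \<int>" using irr_mult[OF irr npos] .
  have hf: "real h * al = of_int H + f" unfolding H_def f_def frac_def by simp
  have nal: "real n * al = 2 * of_int H + 2 * f" using hf nh by simp
  have f01: "0 \<le> f" "f < 1" unfolding f_def by (auto simp: frac_lt_1)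
  have fne: "f \<noteq> 1/2"
  proof
    assume "f = 1/2"
    then have "real n * al = of_int (2 * H + 1)" using nal by simp
    then show False using nni by (metis Ints_of_int)
  qed
  have u: "frac (- (real h * al)) = 1 - f" using hni unfolding f_def by (simp add: frac_neg)
  have flh: "fl th h = H + (if 1 - f \<le> th then 1 else 0)"
    using fl_KL[OF assms hpos] u H_def by simp
  have fln: "fl th n = \<lfloor>real n * al\<rfloor> + (if frac (- (real n * al)) \<le> th then 1 else 0)"
    using fl_KL[OF assms npos] by simp
  have tn: "frac (- (real n * al)) = 1 - frac (real n * al)" using nni by (simp add: frac_neg)
  show ?thesis
  proof (cases "f < 1/2")
    case True
    have "of_int (2 * H) \<le> real n * al \<and> real n * al < of_int (2 * H) + 1" using nal True f01 by simp
    then have fl: "\<lfloor>real n * al\<rfloor> = 2 * H" by (simp only: floor_eq_iff)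
    have fr: "frac (real n * al) = 2 * f" using fl nal unfolding frac_def by simp
    show ?thesis using fl fr tn flh fln True f01 by auto
  next
    case False
    then have F: "f > 1/2" using fne by simp
    have "of_int (2 * H + 1) \<le> real n * al \<and> real n * al < of_int (2 * H + 1) + 1" using nal F f01 by simp
    then have fl: "\<lfloor>real n * al\<rfloor> = 2 * H + 1" by (simp only: floor_eq_iff)
    have fr: "frac (real n * al) = 2 * f - 1" using fl nal unfolding frac_def by simp
    show ?thesis using fl fr tn flh fln F f01 by auto
  qed
qed

end



context stu begin

lemma L_frac:
  "L (frac y) k = (if 1 - al \<le> frac (y + real k * al) then letter.a else letter.b)"
proof -
  have "fl (frac y) (Suc k) = \<lfloor>(y + real k * al) + al\<rfloor> - \<lfloor>y\<rfloor>"
    unfolding fl_Suc by (metis L1 add.assoc)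
  moreover have "fl (frac y) k = \<lfloor>y + real k * al\<rfloor> - \<lfloor>y\<rfloor>" unfolding fl_def by (rule L1)
  ultimately show ?thesis unfolding L_def using L2[OF al0 al1, of "y + real k * al"] by auto
qed

lemma fact_lower: "map (sturmian False al rh) [i..<i+n] = Wd (frac (rh + real i * al))"
proof (rule nth_equalityI)
  show "length (map (sturmian False al rh) [i..<i+n]) = length (Wd (frac (rh + real i * al)))"
    by (simp add: len_Wd)
  fix k assume "k < length (map (sturmian False al rh) [i..<i+n])"
  then have k: "k < n" by simp
  have e: "rh + (real i + real k) * al = (rh + real i * al) + real k * al" by (simp add: algebra_simps)
  show "map (sturmian False al rh) [i..<i+n] ! k = Wd (frac (rh + real i * al)) ! k"
    using k unfolding Wd_def sturmian_def by (simp add: L_frac e)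
qed

lemma fact_upper: "\<exists>th. 0 \<le> th \<and> th < 1 \<and> map (sturmian True al rh) [i..<i+n] = Wd th"
proof -
  define y where "y = rh + real i * al"
  define E where "E = (\<lambda>k. frac_up (y + real k * al)) ` {..n}"
  have Efin: "finite E" "E \<noteq> {}" unfolding E_def by auto
  have Epos: "Min E > 0" using Efin frac_up_pos unfolding E_def by auto
  define e where "e = Min E / 2"
  have e0: "0 < e" using Epos unfolding e_def by simp
  have eb: "e < frac_up (y + real k * al)" if "k \<le> n" for k
  proof -
    have "Min E \<le> frac_up (y + real k * al)" using Efin that unfolding E_def by auto
    then show ?thesis using Epos unfolding e_def by simp
  qed
  have c: "\<lceil>y + real k * al\<rceil> = \<lfloor>(y - e) + real k * al\<rfloor> + 1" if "k \<le> n" for k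
    using L4[OF e0 eb[OF that]] by (simp add: algebra_simps)
  define th where "th = frac (y - e)"
  have "map (sturmian True al rh) [i..<i+n] = Wd th"
  proof (rule nth_equalityI)
    show "length (map (sturmian True al rh) [i..<i+n]) = length (Wd th)" by (simp add: len_Wd)
    fix k assume "k < length (map (sturmian True al rh) [i..<i+n])"
    then have k: "k < n" by simp
    have ee: "rh + (real i + real k) * al = y + real k * al" unfolding y_def by (simp add: algebra_simps)
    have fS: "fl th (Suc k) = \<lceil>y + real (Suc k) * al\<rceil> - 1 - \<lfloor>y - e\<rfloor>"
      unfolding th_def fl_def using c[of "Suc k"] k L1[of "y - e"] by simp
    have fk: "fl th k = \<lceil>y + real k * al\<rceil> - 1 - \<lfloor>y - e\<rfloor>"
      unfolding th_def fl_def using c[of k] k L1[of "y - e"] by simp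
    have s: "y + real (Suc k) * al = (y + real k * al) + al" by (simp add: algebra_simps)
    have "L th k = (if frac_up (y + real k * al) \<le> 1 - al then letter.b else letter.a)"
      unfolding L_def fS fk s using L3[OF al0 al1, of "y + real k * al"]
        L3b[OF al0 al1, of "y + real k * al"] by auto
    then show "map (sturmian True al rh) [i..<i+n] ! k = Wd th ! k"
      using k unfolding Wd_def sturmian_def by (simp add: ee)
  qed
  moreover have "0 \<le> th" "th < 1" unfolding th_def by (auto simp: frac_lt_1)
  ultimately show ?thesis by blast
qed

lemma upper_eq_lower:
  assumes "frac (rh + real i * al) \<notin> B"
  shows "map (sturmian True al rh) [i..<i+n] = map (sturmian False al rh) [i..<i+n]"
proof -
  define y where "y = rh + real i * al"
  have ni: "y + real j * al \<notin> \<int>" if "j \<le> n" for j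
  proof
    assume "y + real j * al \<in> \<int>"
    then have "frac ((y + real j * al) + (- (real j * al))) = frac (- (real j * al))"
      by (rule frac_shift_int)
    then have "frac y \<in> B" unfolding B_def using that by auto
    then show False using assms unfolding y_def by simp
  qed
  show ?thesis
  proof (rule map_cong[OF refl])
    fix m assume "m \<in> set [i..<i+n]"
    then obtain k where k: "k < n" "m = i + k" by (metis atLeastLessThan_iff le_Suc_ex add_less_cancel_left set_upt)
    have ee: "rh + real m * al = y + real k * al" unfolding y_def k(2) by (simp add: algebra_simps)
    have x1: "y + real k * al \<notin> \<int>" using ni k by simp
    have x2: "(y + real k * al) + al \<notin> \<int>"
      using ni[of "Suc k"] k by (simp add: algebra_simps)
    have "frac (y + real k * al) \<noteq> 1 - al"
    proof
      assume "frac (y + real k * al) = 1 - al"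
      then have "(y + real k * al) + al = of_int (\<lfloor>y + real k * al\<rfloor> + 1)"
        unfolding frac_def by simp
      then show False using x2 by (metis Ints_of_int)
    qed
    then show "sturmian True al rh m = sturmian False al rh m"
      unfolding sturmian_def ee using frac_up_eq[OF x1] by auto
  qed
qed

lemma lohi:
  assumes "0 \<le> th" "th < 1"
  shows "\<exists>lo hi. lo \<in> B \<and> lo \<le> th \<and> th < hi \<and> hi \<le> 1 \<and>
     (\<forall>p\<in>B. p \<le> th \<longrightarrow> p \<le> lo) \<and> (\<forall>p\<in>B. th < p \<longrightarrow> hi \<le> p)"
proof -
  define lo where "lo = Max {p\<in>B. p \<le> th}"
  define hi where "hi = Min (insert 1 {p\<in>B. th < p})"
  have f1: "finite {p\<in>B. p \<le> th}" "{p\<in>B. p \<le> th} \<noteq> {}" using B_fin B_0 assms by auto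
  have f2: "finite (insert 1 {p\<in>B. th < p})" using B_fin by auto
  have "lo \<in> {p\<in>B. p \<le> th}" unfolding lo_def using f1 Max_in by blast
  moreover have "\<forall>p\<in>B. p \<le> th \<longrightarrow> p \<le> lo" unfolding lo_def using f1 by auto
  moreover have "th < hi" unfolding hi_def using f2 assms by auto
  moreover have "hi \<le> 1" unfolding hi_def using f2 by auto
  moreover have "\<forall>p\<in>B. th < p \<longrightarrow> hi \<le> p" unfolding hi_def using f2 by auto
  ultimately show ?thesis by blast
qed

lemma factors_eq: "factors_of_length (sturmian upper al rh) n = Wd ` {0..<1}"
proof
  show "factors_of_length (sturmian upper al rh) n \<subseteq> Wd ` {0..<1}"
  proof
    fix v assume "v \<in> factors_of_length (sturmian upper al rh) n"
    then obtain i where v: "v = map (sturmian upper al rh) [i..<i+n]"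
      unfolding factors_of_length_def by auto
    show "v \<in> Wd ` {0..<1}"
    proof (cases upper)
      case True
      then show ?thesis using fact_upper[of rh i] v by auto
    next
      case False
      then show ?thesis using fact_lower[of rh i] v by (auto simp: frac_lt_1)
    qed
  qed
next
  show "Wd ` {0..<1} \<subseteq> factors_of_length (sturmian upper al rh) n"
  proof
    fix v assume "v \<in> Wd ` {0..<1}"
    then obtain th where th: "0 \<le> th" "th < 1" "v = Wd th" by auto
    obtain lo hi where lh: "lo \<in> B" "lo \<le> th" "th < hi" "hi \<le> 1"
      "\<forall>p\<in>B. p \<le> th \<longrightarrow> p \<le> lo" "\<forall>p\<in>B. th < p \<longrightarrow> hi \<le> p"
      using lohi[OF th(1,2)] by blast
    have lo0: "0 \<le> lo" using B_01 lh(1) by blast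
    obtain m :: nat where m: "lo < frac (rh + real m * al)" "frac (rh + real m * al) < hi"
      using dens[OF irr lo0 _ lh(4)] lh(2,3) by (meson le_less_trans)
    define z where "z = frac (rh + real m * al)"
    have z01: "0 \<le> z" "z < 1" unfolding z_def by (auto simp: frac_lt_1)
    have pz: "p \<le> th \<longleftrightarrow> p \<le> z" "p \<noteq> z" if "p \<in> B" for p
      using lh(5,6) m that unfolding z_def by force+
    have "eqv th z" unfolding eqv_def using pz by blast
    then have wz: "Wd th = Wd z" using Wd_eqv th z01 by blast
    have zB: "z \<notin> B" using pz by blast
    have "map (sturmian upper al rh) [m..<m+n] = Wd z"
      using fact_lower[of rh m] upper_eq_lower[of rh m] zB unfolding z_def
      by (cases upper) auto
    then show "v \<in> factors_of_length (sturmian upper al rh) n"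
      unfolding factors_of_length_def using th(3) wz by (metis (mono_tags, lifting) mem_Collect_eq)
  qed
qed

lemma ASF_eq: "ASF (sturmian upper al rh) n = card {p\<in>B. abelian_square (Wd p)}"
proof -
  define S where "S = {th\<in>{0..<1}. abelian_square (Wd th)}"
  have "{v \<in> factors_of_length (sturmian upper al rh) n. abelian_square v} = Wd ` S"
    unfolding factors_eq S_def by auto
  moreover have "Wd ` S = Wd ` (B \<inter> S)"
  proof
    show "Wd ` S \<subseteq> Wd ` (B \<inter> S)"
    proof
      fix v assume "v \<in> Wd ` S"
      then obtain th where th: "0 \<le> th" "th < 1" "abelian_square (Wd th)" "v = Wd th"
        unfolding S_def by auto
      obtain lo hi where lh: "lo \<in> B" "lo \<le> th" "\<forall>p\<in>B. p \<le> th \<longrightarrow> p \<le> lo"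
        using lohi[OF th(1,2)] by blast
      have lo01: "0 \<le> lo" "lo < 1" using B_01 lh(1) by auto
      have "eqv th lo" unfolding eqv_def using lh by force
      then have "Wd th = Wd lo" using Wd_eqv th lo01 by blast
      then show "v \<in> Wd ` (B \<inter> S)" using lh(1) lo01 th unfolding S_def by auto
    qed
  qed auto
  moreover have "inj_on Wd (B \<inter> S)"
  proof (rule inj_onI)
    fix p q assume pq: "p \<in> B \<inter> S" "q \<in> B \<inter> S" "Wd p = Wd q"
    then have "eqv p q" using Wd_eqv B_01 by blast
    then have "p \<le> q" "q \<le> p" using pq unfolding eqv_def by auto
    then show "p = q" by simp
  qed
  moreover have "B \<inter> S = {p\<in>B. abelian_square (Wd p)}" unfolding S_def using B_01 by auto
  ultimately show ?thesis unfolding ASF_def by (simp add: card_image)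
qed

end



context stu begin

lemma B_I: "B = insert 0 (I_set n al)"
proof -
  have "{..n} = insert 0 {1..n}" by auto
  then have "B = insert (frac (- (real 0 * al))) ((\<lambda>j. frac (- (real j * al))) ` {1..n})"
    unfolding B_def by simp
  moreover have "(\<lambda>j. frac (- (real j * al))) ` {1..n} = I_set n al"
    unfolding I_set_def by auto
  ultimately show ?thesis by simp
qed

lemma I_fin: "finite (I_set n al)" using B_fin B_I by simp

lemma zero_notin_I: "0 \<notin> I_set n al"
proof
  assume "0 \<in> I_set n al"
  then obtain i where i: "1 \<le> i" "frac (- (real i * al)) = 0" unfolding I_set_def by auto
  then have "- (real i * al) \<in> \<int>" by simp
  then have "real i * al \<in> \<int>" by (metis Ints_minus minus_minus)
  then show False using irr_mult[OF irr] i by simp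
qed

lemma t_in_I: "frac (- (real n * al)) \<in> I_set n al"
proof -
  have "1 \<le> n" using nh hpos by simp
  then show ?thesis unfolding I_set_def by blast
qed

theorem main:
  "ASF (sturmian upper al rh) n =
    (if even \<lfloor>real n * al\<rfloor>
     then card {x \<in> I_set n al. x \<le> frac (- (real n * al))}
     else card {x \<in> I_set n al. x \<ge> frac (- (real n * al))})"
proof -
  define t where "t = frac (- (real n * al))"
  define I where "I = I_set n al"
  have tI: "t \<in> I" using t_in_I unfolding t_def I_def .
  have t0: "0 < t" using tI zero_notin_I unfolding I_def t_def
    by (metis frac_ge_0 order_le_less)
  have "{p\<in>B. abelian_square (Wd p)} =
     {p\<in>B. if even \<lfloor>real n * al\<rfloor> then p < t else t \<le> p}"
    using AS_iff t_iff B_01 unfolding t_def by blast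
  then have A: "ASF (sturmian upper al rh) n = card {p\<in>B. if even \<lfloor>real n * al\<rfloor> then p < t else t \<le> p}"
    using ASF_eq by simp
  show ?thesis
  proof (cases "even \<lfloor>real n * al\<rfloor>")
    case True
    have e1: "{p\<in>B. p < t} = insert 0 {x\<in>I. x < t}" using B_I t0 unfolding I_def by auto
    have e2: "{x\<in>I. x \<le> t} = insert t {x\<in>I. x < t}" using tI by auto
    have "card {p\<in>B. p < t} = card {x\<in>I. x \<le> t}"
      unfolding e1 e2 using I_fin zero_notin_I unfolding I_def by simp
    then show ?thesis using A True unfolding t_def I_def by simp
  next
    case False
    have "{p\<in>B. t \<le> p} = {x\<in>I. t \<le> x}" using B_I t0 unfolding I_def by auto
    then show ?thesis using A False unfolding t_def I_def by simp
  qed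
qed

end

theorem corollary2:
  fixes \<alpha> \<rho> :: real and n :: nat and upper :: bool
  assumes "0 < \<alpha>" and "\<alpha> < 1" and "\<alpha> \<notin> \<rat>"
    and "0 \<le> \<rho>" and "\<rho> < 1"
    and "n > 0" and "even n"
  shows "ASF (sturmian upper \<alpha> \<rho>) n =
    (if even \<lfloor>real n * \<alpha>\<rfloor>
     then card {x \<in> I_set n \<alpha>. x \<le> frac (- (real n * \<alpha>))}
     else card {x \<in> I_set n \<alpha>. x \<ge> frac (- (real n * \<alpha>))})"
proof -
  interpret stu \<alpha> n "n div 2"
    using assms by unfold_locales auto
  show ?thesis by (rule main)
qed


end
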